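(* Let $H$ be an infinite-dimensional separable complex Hilbert space with orthonormal basis $(e_i)_{i\in\mathbb{N}}$, and let $D=\sum_{i\in\mathbb{N}}\lambda_i\, e_i\otimes e_i$ be a bounded diagonal operator such that $\lambda_i\neq\lambda_j$ for all $i\neq j$ and such that $\sigma(D)$ is a perfect compact set. Then there exists a vector $u\in H$ such that (1) $\langle u,e_i\rangle\neq 0$ for all $i\in\mathbb{N}$, and (2) for all $z\in\sigma(D)\setminus\sigma_p(D)$, $$\sum_{i\in\mathbb{N}}\frac{|\langle u,e_i\rangle|^2}{|z-\lambda_i|^2}=\infty.$$
   Context: For $u,v\in H$, $u\otimes v$ denotes the operator $h\mapsto\langle h,v\rangle u$, so $De_i=\lambda_i e_i$. $\sigma(D)$ is the spectrum of $D$ (here the closure of $\{\lambda_i\}$) and $\sigma_p(D)=\{\lambda_i:i\in\mathbb{N}\}$ its set of eigenvalues. A set is perfect if it has no isolated points. *)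

theory Defs
  imports "HOL-Analysis.Analysis"
begin

text \<open>The separable infinite-dimensional Hilbert space H with orthonormal basis (e_i) is
  represented, via its coordinates u \<mapsto> (\<langle>u,e_i\<rangle>)_i, as the space of square-summable
  complex sequences (l^2(N)). The diagonal operator D is determined by its eigenvalue
  sequence lambda.\<close>

definition in_ell2 :: "(nat \<Rightarrow> complex) \<Rightarrow> bool" where
  "in_ell2 c \<longleftrightarrow> summable (\<lambda>i. (cmod (c i))\<^sup>2)"

definition diag_bounded :: "(nat \<Rightarrow> complex) \<Rightarrow> bool" where
  "diag_bounded lam \<longleftrightarrow> bounded (range lam)"

definition diag_spectrum :: "(nat \<Rightarrow> complex) \<Rightarrow> complex set" where
  "diag_spectrum lam = closure (range lam)"

definition diag_point_spectrum :: "(nat \<Rightarrow> complex) \<Rightarrow> complex set" where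
  "diag_point_spectrum lam = range lam"

definition perfect_set :: "'a::topological_space set \<Rightarrow> bool" where
  "perfect_set S \<longleftrightarrow> (\<forall>x\<in>S. x islimpt S)"

end

theory Submission
  imports Defs
begin

definition sq :: "complex \<Rightarrow> real \<Rightarrow> complex set" where
 "sq c h = {z. \<bar>Re (z - c)\<bar> \<le> h \<and> \<bar>Im (z - c)\<bar> \<le> h}"

definition child :: "complex \<Rightarrow> real \<Rightarrow> bool \<times> bool \<Rightarrow> complex" where
 "child c h q = c + Complex (if fst q then h/2 else -h/2) (if snd q then h/2 else -h/2)"

definition good :: "(nat \<Rightarrow> complex) \<Rightarrow> complex \<Rightarrow> real \<Rightarrow> nat set \<Rightarrow> (nat \<Rightarrow> real) \<Rightarrow> bool" where
 "good lam c h A w \<longleftrightarrow> finite A \<and> (\<forall>i\<in>A. 0 \<le> w i) \<and> sum w A = 1 \<and> (\<forall>i\<in>A. cmod (lam i - c) \<le> 3*h)"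

lemma sq_cmod: "z \<in> sq c h \<Longrightarrow> cmod (z - c) \<le> 2*h"
  unfolding sq_def using cmod_le[of "z-c"] by auto

lemma child_cmod: "h > 0 \<Longrightarrow> cmod (child c h q - c) \<le> h"
  unfolding child_def using cmod_le[of "Complex (if fst q then h/2 else -h/2) (if snd q then h/2 else -h/2)"]
  by auto

lemma child_cover: "z \<in> sq c h \<Longrightarrow> \<exists>q. z \<in> sq (child c h q) (h/2)"
proof -
  assume "z \<in> sq c h"
  then have a: "\<bar>Re (z - c)\<bar> \<le> h" "\<bar>Im (z - c)\<bar> \<le> h" by (auto simp: sq_def)
  let ?q = "(Re (z - c) \<ge> 0, Im (z - c) \<ge> 0)"
  have "z \<in> sq (child c h ?q) (h/2)"
    using a unfolding sq_def child_def by (auto simp: abs_if split: if_splits)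
  then show ?thesis by blast
qed

lemma pot_lower:
  assumes "finite A" "\<forall>i\<in>A. 0 \<le> w i" "sum w A = 1"
    "\<forall>i\<in>A. 0 < cmod (z - lam i) \<and> cmod (z - lam i) \<le> D"
  shows "1 / D^2 \<le> (\<Sum>i\<in>A. w i / (cmod (z - lam i))^2)"
proof -
  have "1 / D^2 = (\<Sum>i\<in>A. w i / D^2)" using assms(3) by (simp add: sum_divide_distrib[symmetric])
  also have "\<dots> \<le> (\<Sum>i\<in>A. w i / (cmod (z - lam i))^2)"
  proof (rule sum_mono)
    fix i assume i: "i \<in> A"
    then have "0 < (cmod (z - lam i))^2" "(cmod (z - lam i))^2 \<le> D^2"
      using assms(4) by (auto intro: power_mono)
    then show "w i / D^2 \<le> w i / (cmod (z - lam i))^2"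
      using assms(2) i by (intro divide_left_mono) (auto intro!: mult_pos_pos)
  qed
  finally show ?thesis .
qed

lemma base:
  assumes dense: "\<forall>z\<in>S. \<forall>e>0. \<exists>i. cmod (lam i - z) < e" and "h > 0" and "z0 \<in> S \<inter> sq c h"
  shows "\<exists>A w. good lam c h A w"
proof -
  obtain i where i: "cmod (lam i - z0) < h" using dense assms(2,3) by blast
  have "cmod (lam i - c) \<le> cmod (lam i - z0) + cmod (z0 - c)"
    by (metis add.commute diff_add_cancel norm_triangle_ineq add_diff_eq)
  also have "\<dots> \<le> 3*h" using i sq_cmod[of z0 c h] assms(3) by auto
  finally show ?thesis unfolding good_def by (intro exI[of _ "{i}"] exI[of _ "\<lambda>_. 1"]) auto
qed

definition pot :: "(nat \<Rightarrow> complex) \<Rightarrow> nat set \<Rightarrow> (nat \<Rightarrow> real) \<Rightarrow> complex \<Rightarrow> real" where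
  "pot lam A w z = (\<Sum>i\<in>A. w i / (cmod (z - lam i))^2)"

lemma key:
  assumes dense: "\<forall>z\<in>S. \<forall>e>0. \<exists>i. cmod (lam i - z) < e" and rng: "range lam \<subseteq> S"
  shows "h > 0 \<Longrightarrow> S \<inter> sq c h \<noteq> {} \<Longrightarrow> \<exists>A w. good lam c h A w \<and>
     (\<forall>z\<in>S \<inter> sq c h - range lam. real J / (40*h^2) \<le> pot lam A w z)"
proof (induction J arbitrary: c h)
  case 0
  then obtain z0 where "z0 \<in> S \<inter> sq c h" by blast
  from base[OF dense 0(1) this] obtain A w where g: "good lam c h A w" by blast
  have "\<forall>z. 0 \<le> pot lam A w z" using g unfolding pot_def good_def by (auto intro!: sum_nonneg)
  then show ?case using g by auto
next
  case (Suc J)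
  have ch: "\<forall>q. \<exists>A w. good lam c h A w \<and> (\<forall>z\<in>S \<inter> sq (child c h q) (h/2) - range lam.
            real J / (40*(h/2)^2) \<le> pot lam A w z)"
  proof
    fix q
    show "\<exists>A w. good lam c h A w \<and> (\<forall>z\<in>S \<inter> sq (child c h q) (h/2) - range lam.
            real J / (40*(h/2)^2) \<le> pot lam A w z)"
    proof (cases "S \<inter> sq (child c h q) (h/2) = {}")
      case True
      obtain z0 where "z0 \<in> S \<inter> sq c h" using Suc.prems by blast
      from base[OF dense Suc.prems(1) this] obtain A w where g: "good lam c h A w" by blast
      then show ?thesis using True by blast
    next
      case False
      from Suc.IH[of "h/2" "child c h q"] False Suc.prems obtain A w where
        g: "good lam (child c h q) (h/2) A w" and
        p: "\<forall>z\<in>S \<inter> sq (child c h q) (h/2) - range lam. real J / (40*(h/2)^2) \<le> pot lam A w z"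
        by auto
      have "good lam c h A w" unfolding good_def
      proof (intro conjI ballI)
        fix i assume i: "i \<in> A"
        have "cmod (lam i - c) \<le> cmod (lam i - child c h q) + cmod (child c h q - c)"
          by (metis diff_add_cancel norm_triangle_ineq add_diff_eq)
        also have "\<dots> \<le> 3*(h/2) + h" using g i child_cmod[OF Suc.prems(1), of c q]
          unfolding good_def by (intro add_mono) auto
        finally show "cmod (lam i - c) \<le> 3*h" using Suc.prems by auto
      qed (use g in \<open>auto simp: good_def\<close>)
      then show ?thesis using p by blast
    qed
  qed
  then obtain AA WW where AW: "\<And>q. good lam c h (AA q) (WW q) \<and> (\<forall>z\<in>S \<inter> sq (child c h q) (h/2) - range lam.
            real J / (40*(h/2)^2) \<le> pot lam (AA q) (WW q) z)"
    by metis
  define A where "A = (\<Union>q. AA q)"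
  define V where "V q i = (if i \<in> AA q then WW q i else 0)" for q i
  define w where "w i = (\<Sum>q\<in>UNIV. V q i) / 4" for i
  have finA: "finite A" unfolding A_def using AW by (auto simp: good_def)
  have sub: "AA q \<subseteq> A" for q unfolding A_def by auto
  have resV: "(\<Sum>i\<in>A. V q i * f i) = (\<Sum>i\<in>AA q. WW q i * f i)" for q f
  proof -
    have "(\<Sum>i\<in>A. V q i * f i) = (\<Sum>i\<in>A. if i \<in> AA q then WW q i * f i else 0)"
      unfolding V_def by (intro sum.cong) auto
    also have "\<dots> = (\<Sum>i\<in>A \<inter> AA q. WW q i * f i)" using sum.inter_restrict[OF finA] by metis
    also have "A \<inter> AA q = AA q" using sub by blast
    finally show ?thesis .
  qed
  have wsum: "(\<Sum>i\<in>A. w i * f i) = (\<Sum>q\<in>UNIV. \<Sum>i\<in>AA q. WW q i * f i) / 4" for f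
  proof -
    have "(\<Sum>i\<in>A. w i * f i) = (\<Sum>i\<in>A. \<Sum>q\<in>UNIV. V q i * f i) / 4"
      unfolding w_def by (simp add: sum_divide_distrib sum_distrib_right)
    also have "\<dots> = (\<Sum>q\<in>UNIV. \<Sum>i\<in>A. V q i * f i) / 4" by (simp add: sum.swap[of _ A])
    also have "\<dots> = (\<Sum>q\<in>UNIV. \<Sum>i\<in>AA q. WW q i * f i) / 4" using resV by simp
    finally show ?thesis .
  qed
  have card3: "card (UNIV - {q0::bool\<times>bool}) = 3" for q0
    by (simp add: card_Diff_singleton card_UNIV_bool card_cartesian_product)
  have good: "good lam c h A w" unfolding good_def
  proof (intro conjI ballI)
    show "finite A" by (rule finA)
    fix i assume "i \<in> A"
    then obtain q where "i \<in> AA q" unfolding A_def by blast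
    then show "cmod (lam i - c) \<le> 3*h" using AW[of q] by (auto simp: good_def)
  next
    fix i
    have "0 \<le> V q i" for q using AW[of q] unfolding V_def good_def by auto
    then show "0 \<le> w i" unfolding w_def by (auto intro: sum_nonneg)
  next
    have "(\<Sum>i\<in>A. w i) = (\<Sum>i\<in>A. w i * 1)" by simp
    also have "\<dots> = (\<Sum>q\<in>UNIV. \<Sum>i\<in>AA q. WW q i * 1) / 4" by (rule wsum)
    also have "\<dots> = (\<Sum>q\<in>(UNIV::(bool\<times>bool) set). 1) / 4" using AW by (simp add: good_def)
    also have "\<dots> = 1" by (simp add: card_UNIV_bool card_cartesian_product)
    finally show "sum w A = 1" .
  qed
  have "real (Suc J) / (40*h^2) \<le> pot lam A w z" if z: "z \<in> S \<inter> sq c h - range lam" for z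
  proof -
    obtain q0 where q0: "z \<in> sq (child c h q0) (h/2)" using child_cover z by blast
    have p0: "real J / (40*(h/2)^2) \<le> pot lam (AA q0) (WW q0) z" using AW[of q0] q0 z by blast
    have po: "1 / (5*h)^2 \<le> pot lam (AA q) (WW q) z" for q
      unfolding pot_def
    proof (rule pot_lower)
      show "finite (AA q)" "\<forall>i\<in>AA q. 0 \<le> WW q i" "sum (WW q) (AA q) = 1"
        using AW[of q] by (auto simp: good_def)
      show "\<forall>i\<in>AA q. 0 < cmod (z - lam i) \<and> cmod (z - lam i) \<le> 5 * h"
      proof
        fix i assume i: "i \<in> AA q"
        have "z \<noteq> lam i" using z by auto
        moreover have "cmod (z - lam i) \<le> cmod (z - c) + cmod (lam i - c)"
          by (metis norm_minus_commute diff_add_cancel norm_triangle_ineq add_diff_eq)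
        moreover have "cmod (z - c) \<le> 2*h" using sq_cmod z by auto
        moreover have "cmod (lam i - c) \<le> 3*h" using AW[of q] i by (auto simp: good_def)
        ultimately show "0 < cmod (z - lam i) \<and> cmod (z - lam i) \<le> 5 * h" by auto
      qed
    qed
    have e1: "pot lam A w z = (\<Sum>q\<in>UNIV. pot lam (AA q) (WW q) z) / 4"
      unfolding pot_def using wsum[of "\<lambda>i. 1 / (cmod (z - lam i))^2"] by simp
    have e2: "(\<Sum>q\<in>UNIV. pot lam (AA q) (WW q) z) = pot lam (AA q0) (WW q0) z + (\<Sum>q\<in>UNIV - {q0}. pot lam (AA q) (WW q) z)"
      by (simp add: sum.remove)
    have e3: "(\<Sum>q\<in>UNIV - {q0}. pot lam (AA q) (WW q) z) \<ge> (\<Sum>q\<in>UNIV - {q0}. 1 / (5*h)^2)"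
      by (intro sum_mono po)
    have e4: "(\<Sum>q\<in>UNIV - {q0}. (1::real) / (5*h)^2) = 3 / (5*h)^2" using card3[of q0] by simp
    have "pot lam A w z \<ge> (real J / (40*(h/2)^2) + 3 / (5*h)^2) / 4" 
    proof -
      define a where "a = real J / (40*(h/2)^2)"
      define b where "b = 3 / (5*h)^2"
      define P0 where "P0 = pot lam (AA q0) (WW q0) z"
      define R where "R = (\<Sum>q\<in>UNIV - {q0}. pot lam (AA q) (WW q) z)"
      have x1: "pot lam A w z = (P0 + R) / 4" using e1 e2 unfolding P0_def R_def by simp
      have x2: "b \<le> R" using e3 e4 unfolding b_def R_def by simp
      have x3: "a \<le> P0" using p0 unfolding a_def P0_def by simp
      have "(a + b) / 4 \<le> (P0 + R) / 4" using x2 x3 by simp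
      then show ?thesis unfolding a_def[symmetric] b_def[symmetric] x1 .
    qed
    moreover have "(real J / (40*(h/2)^2) + 3 / (5*h)^2) / 4 \<ge> real (Suc J) / (40*h^2)"
      using Suc.prems(1) by (simp add: field_simps power2_eq_square)
    ultimately show ?thesis by linarith
  qed
  then show ?case using good by blast
qed

theorem proposition5:
  fixes lam :: "nat \<Rightarrow> complex"
  assumes "diag_bounded lam"
    and "inj lam"
    and "perfect_set (diag_spectrum lam)"
    and "compact (diag_spectrum lam)"
  shows "\<exists>u. in_ell2 u \<and> (\<forall>i. u i \<noteq> 0) \<and>
           (\<forall>z \<in> diag_spectrum lam - diag_point_spectrum lam.
              \<not> summable (\<lambda>i. (cmod (u i))\<^sup>2 / (cmod (z - lam i))\<^sup>2))"
proof -
  define S where "S = diag_spectrum lam"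
  have rng: "range lam \<subseteq> S" unfolding S_def diag_spectrum_def by (rule closure_subset)
  have dense: "\<forall>z\<in>S. \<forall>e>0. \<exists>i. cmod (lam i - z) < e"
    unfolding S_def diag_spectrum_def by (metis closure_approachable dist_norm imageE)
  have "bounded S" using assms(4) unfolding S_def by (rule compact_imp_bounded)
  then obtain R where R: "R > 0" "\<And>z. z \<in> S \<Longrightarrow> cmod z \<le> R" by (meson bounded_pos)
  have Ssq: "S \<inter> sq 0 R = S" unfolding sq_def using R(2) abs_Re_le_cmod abs_Im_le_cmod
    by (force intro: order_trans)
  have Sne: "S \<inter> sq 0 R \<noteq> {}" using Ssq rng by auto
  have "\<forall>k. \<exists>A w. good lam 0 R A w \<and> (\<forall>z\<in>S - range lam. 2^k \<le> pot lam A w z)"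
  proof
    fix k :: nat
    define J where "J = nat \<lceil>40 * R^2 * 2^k\<rceil>"
    obtain A w where g: "good lam 0 R A w" and
      p: "\<forall>z\<in>S \<inter> sq 0 R - range lam. real J / (40*R^2) \<le> pot lam A w z"
      using key[OF dense rng R(1) Sne, of J] by blast
    have "2^k \<le> real J / (40*R^2)"
      using R(1) unfolding J_def by (simp add: field_simps)
    then show "\<exists>A w. good lam 0 R A w \<and> (\<forall>z\<in>S - range lam. 2^k \<le> pot lam A w z)"
      using g p Ssq by (intro exI[of _ A] exI[of _ w]) force
  qed
  then obtain AA WW where AW: "\<And>k. good lam 0 R (AA k) (WW k)"
    "\<And>k z. z \<in> S - range lam \<Longrightarrow> 2^k \<le> pot lam (AA k) (WW k) z" by metis
  define V where "V k i = (if i \<in> AA k then WW k i else 0)" for k i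
  have V0: "0 \<le> V k i" for k i using AW(1)[of k] unfolding V_def good_def by auto
  have V1: "V k i \<le> 1" for k i
  proof (cases "i \<in> AA k")
    case True
    then have "WW k i \<le> sum (WW k) (AA k)" using AW(1)[of k] unfolding good_def
      by (intro member_le_sum) auto
    then show ?thesis using AW(1)[of k] True unfolding V_def good_def by auto
  qed (simp add: V_def)
  have resV: "(\<Sum>i\<in>B. V k i * f i) = (\<Sum>i\<in>AA k. WW k i * f i)" if "finite B" "AA k \<subseteq> B" for k f B
  proof -
    have "(\<Sum>i\<in>B. V k i * f i) = (\<Sum>i\<in>B. if i \<in> AA k then WW k i * f i else 0)"
      unfolding V_def by (intro sum.cong) auto
    also have "\<dots> = (\<Sum>i\<in>B \<inter> AA k. WW k i * f i)" using sum.inter_restrict[OF that(1)] by metis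
    also have "B \<inter> AA k = AA k" using that by blast
    finally show ?thesis .
  qed
  have sumV: "(\<Sum>i<n. V k i) \<le> 1" for k n
  proof -
    have "(\<Sum>i<n. V k i) = (\<Sum>i\<in>{..<n} \<inter> AA k. WW k i)"
      using sum.inter_restrict[of "{..<n}" "WW k" "AA k"] unfolding V_def by simp
    also have "\<dots> \<le> (\<Sum>i\<in>AA k. WW k i)"
      using AW(1)[of k] unfolding good_def by (intro sum_mono2) auto
    also have "\<dots> = 1" using AW(1)[of k] unfolding good_def by auto
    finally show ?thesis .
  qed
  have sk: "summable (\<lambda>k. (1/2::real)^k * V k i)" for i
    by (rule summable_comparison_test'[where g="\<lambda>k. (1/2::real)^k"]) (auto simp: V0 V1 mult_left_le)
  define W where "W i = (1/2::real)^i + (\<Sum>k. (1/2)^k * V k i)" for i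
  have Wpos: "0 < W i" for i
    unfolding W_def using sk[of i] by (intro add_pos_nonneg) (auto intro!: suminf_nonneg simp: V0)
  define u where "u i = complex_of_real (sqrt (W i))" for i
  have cu: "(cmod (u i))^2 = W i" for i unfolding u_def using Wpos[of i] by simp
  have "in_ell2 u" unfolding in_ell2_def cu
  proof (rule summableI_nonneg_bounded[where x=4])
    fix n
    show "0 \<le> W n" using Wpos[of n] by simp
    have a: "(\<Sum>i<n. (1/2::real)^i) \<le> 2"
      using sum_le_suminf[OF summable_geometric[of "1/2::real"], of "{..<n}"]
      by (simp add: suminf_geometric)
    have "(\<Sum>i<n. \<Sum>k. (1/2::real)^k * V k i) = (\<Sum>k. \<Sum>i<n. (1/2::real)^k * V k i)"
      using suminf_sum[of "{..<n}" "\<lambda>i k. (1/2::real)^k * V k i"] sk by simp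
    also have "\<dots> \<le> (\<Sum>k. (1/2::real)^k)"
    proof (rule suminf_le)
      fix k
      have "(\<Sum>i<n. (1/2::real)^k * V k i) = (1/2)^k * (\<Sum>i<n. V k i)" by (simp add: sum_distrib_left)
      also have "\<dots> \<le> (1/2)^k" using sumV[of k n] by (simp add: mult_left_le)
      finally show "(\<Sum>i<n. (1/2::real)^k * V k i) \<le> (1/2)^k" .
    next
      show "summable (\<lambda>k. \<Sum>i<n. (1/2::real)^k * V k i)" using sk by (intro summable_sum) auto
    qed simp
    also have "\<dots> = 2" by (simp add: suminf_geometric)
    finally show "(\<Sum>i<n. W i) \<le> 4" using a unfolding W_def sum.distrib by linarith
  qed
  moreover have "u i \<noteq> 0" for i using cu[of i] Wpos[of i] by auto
  moreover have "\<not> summable (\<lambda>i. (cmod (u i))\<^sup>2 / (cmod (z - lam i))\<^sup>2)"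
    if z: "z \<in> diag_spectrum lam - diag_point_spectrum lam" for z
  proof
    assume sm: "summable (\<lambda>i. (cmod (u i))\<^sup>2 / (cmod (z - lam i))\<^sup>2)"
    define f where "f i = W i / (cmod (z - lam i))\<^sup>2" for i
    have smf: "summable f" using sm unfolding f_def cu .
    have zS: "z \<in> S - range lam" using z unfolding S_def diag_point_spectrum_def by auto
    have f0: "0 \<le> f i" for i unfolding f_def using Wpos[of i] by simp
    have "real K \<le> suminf f" for K
    proof -
      define B where "B = (\<Union>k<K. AA k)"
      have finB: "finite B" unfolding B_def using AW(1) by (auto simp: good_def)
      have Wge: "(\<Sum>k<K. (1/2::real)^k * V k i) \<le> W i" for i
      proof -
        have "(\<Sum>k<K. (1/2::real)^k * V k i) \<le> (\<Sum>k. (1/2)^k * V k i)"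
          using sk by (intro sum_le_suminf) (auto simp: V0)
        moreover have "(0::real) \<le> (1/2)^i" by simp
        ultimately show ?thesis unfolding W_def by linarith
      qed
      have "real K = (\<Sum>k<K. (1/2::real)^k * 2^k)" by (simp add: power_mult_distrib[symmetric])
      also have "\<dots> \<le> (\<Sum>k<K. (1/2::real)^k * pot lam (AA k) (WW k) z)"
        using AW(2)[OF zS] by (intro sum_mono mult_left_mono) auto
      also have "\<dots> = (\<Sum>k<K. (1/2::real)^k * (\<Sum>i\<in>B. V k i * (1 / (cmod (z - lam i))\<^sup>2)))"
        unfolding pot_def
        by (intro sum.cong refl, subst resV[OF finB]) (auto simp: B_def)
      also have "\<dots> = (\<Sum>i\<in>B. (\<Sum>k<K. (1/2::real)^k * V k i) / (cmod (z - lam i))\<^sup>2)"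
        by (simp add: sum_distrib_left sum_divide_distrib sum.swap[of _ B] mult.assoc)
      also have "\<dots> \<le> (\<Sum>i\<in>B. f i)"
        unfolding f_def by (intro sum_mono divide_right_mono Wge) auto
      also have "\<dots> \<le> suminf f" using smf finB f0 by (intro sum_le_suminf) auto
      finally show ?thesis .
    qed
    then show False by (meson not_le reals_Archimedean2)
  qed
  ultimately show ?thesis by blast
qed

end
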